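(* Let $k$ be any field, $S=k[x_1,x_2,x_3,x_4]$, and let $M\subseteq S$ be a monomial ideal. Then for every $i\ge 0$, $$\beta_i(S/M)=\sum_{m\in\mathbb{T}_M}\beta_{i,y_m}(T/M''_m),$$ where the sum runs over the set of distinct multidegrees $m$ of the Taylor resolution $\mathbb{T}_M$.
   Context: $\beta_i(S/M)=\dim_k\operatorname{Tor}_i^S(S/M,k)$ is the total Betti number and $\beta_{i,\mu}$ denotes the multigraded Betti number in multidegree $\mu$. Let $G$ be the minimal monomial generating set of $M$. The multidegrees of the Taylor resolution $\mathbb{T}_M$ are the monomials $\operatorname{lcm}(D)$, $D\subseteq G$ ($\operatorname{lcm}(\emptyset)=1$); "$m\in\mathbb{T}_M$" ranges over the set of distinct such monomials. For such $m$, let $G_m=\{g\in G: g\mid m\}=\{m_1,\dots,m_q\}$, write $m_i=x_1^{\alpha_{i1}}\cdots x_4^{\alpha_{i4}}$, and $m=x_1^{\alpha_1}\cdots x_4^{\alpha_4}$ with $\alpha_j=\max_i\alpha_{ij}$. Let $T=k[y_1,\dots,y_4]$ be a polynomial ring in new variables. The squarefree twin ideal is $M''_m=(m''_1,\dots,m''_q)\subseteq T$ with $m''_i=\prod_{j:\ \alpha_j>0,\ \alpha_{ij}=\alpha_j} y_j$, and $y_m=\prod_{j:\ \alpha_j>0}y_j$. *)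

theory Defs
  imports Complex_Main "HOL-Library.Function_Algebras"
begin

text \<open>Monomials of \<open>k[x_0,...,x_(n-1)]\<close> are encoded by exponent vectors
  \<open>nat \<Rightarrow> nat\<close> vanishing outside \<open>{0..<n}\<close>; divisibility is the pointwise order.\<close>

definition monoms :: "nat \<Rightarrow> (nat \<Rightarrow> nat) set" where
  "monoms n = {a. \<forall>j\<ge>n. a j = 0}"

text \<open>A monomial ideal is represented by the set of (exponent vectors of) monomials
  it contains; a set of monomials is the monomial set of a monomial ideal iff it is
  closed under multiplication by monomials.\<close>

definition monomial_ideal :: "nat \<Rightarrow> (nat \<Rightarrow> nat) set \<Rightarrow> bool" where
  "monomial_ideal n Mon \<longleftrightarrow> Mon \<subseteq> monoms n \<and>
     (\<forall>a\<in>Mon. \<forall>b\<in>monoms n. a \<le> b \<longrightarrow> b \<in> Mon)"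

definition min_gens :: "(nat \<Rightarrow> nat) set \<Rightarrow> (nat \<Rightarrow> nat) set" where
  "min_gens Mon = {g\<in>Mon. \<forall>h\<in>Mon. h \<le> g \<longrightarrow> h = g}"

definition lcm_mon :: "(nat \<Rightarrow> nat) set \<Rightarrow> (nat \<Rightarrow> nat)" where
  "lcm_mon D = (\<lambda>j. Max (insert 0 ((\<lambda>g. g j) ` D)))"

definition taylor_mdegs :: "(nat \<Rightarrow> nat) set \<Rightarrow> (nat \<Rightarrow> nat) set" where
  "taylor_mdegs G = {lcm_mon D | D. D \<subseteq> G \<and> finite D}"

definition twin_gen :: "nat \<Rightarrow> (nat \<Rightarrow> nat) \<Rightarrow> (nat \<Rightarrow> nat) \<Rightarrow> (nat \<Rightarrow> nat)" where
  "twin_gen n m g = (\<lambda>j. if j < n \<and> 0 < m j \<and> g j = m j then 1 else 0)"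

definition twin_ideal :: "nat \<Rightarrow> (nat \<Rightarrow> nat) set \<Rightarrow> (nat \<Rightarrow> nat) \<Rightarrow> (nat \<Rightarrow> nat) set" where
  "twin_ideal n Mon m =
     {b\<in>monoms n. \<exists>g\<in>min_gens Mon. g \<le> m \<and> twin_gen n m g \<le> b}"

definition y_mon :: "nat \<Rightarrow> (nat \<Rightarrow> nat) \<Rightarrow> (nat \<Rightarrow> nat)" where
  "y_mon n m = (\<lambda>j. if j < n \<and> 0 < m j then 1 else 0)"

text \<open>Multigraded Betti numbers \<open>\<beta>_{i,\<mu>}(S/M) = dim_k Tor_i^S(S/M,k)_\<mu>\<close>, computed
  as \<open>Tor_i^S(k,S/M)\<close> via the Koszul resolution of \<open>k\<close>: the homology in
  homological degree \<open>i\<close> and multidegree \<open>\<mu>\<close> of \<open>K(x_0,..,x_(n-1)) \<otimes> S/M\<close>.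
  The degree \<open>(i,\<mu>)\<close> part of this complex has \<open>k\<close>-basis the elements
  \<open>x^(\<mu>-F) e_F\<close> with \<open>F \<subseteq> {0..<n}\<close>, \<open>|F| = i\<close>, \<open>x^F | x^\<mu>\<close>, \<open>x^(\<mu>-F) \<notin> M\<close>.\<close>

definition ind_set :: "nat set \<Rightarrow> (nat \<Rightarrow> nat)" where
  "ind_set F = (\<lambda>j. if j \<in> F then 1 else 0)"

definition kbasis :: "nat \<Rightarrow> (nat \<Rightarrow> nat) set \<Rightarrow> nat \<Rightarrow> (nat \<Rightarrow> nat) \<Rightarrow> nat set set" where
  "kbasis n Mon i \<mu> = {F. F \<subseteq> {0..<n} \<and> card F = i \<and> ind_set F \<le> \<mu> \<and> \<mu> - ind_set F \<notin> Mon}"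

definition kchains :: "'k::field itself \<Rightarrow> nat \<Rightarrow> (nat \<Rightarrow> nat) set \<Rightarrow> nat \<Rightarrow> (nat \<Rightarrow> nat)
    \<Rightarrow> (nat set \<Rightarrow> 'k) set" where
  "kchains _ n Mon i \<mu> = {c. \<forall>F. F \<notin> kbasis n Mon i \<mu> \<longrightarrow> c F = 0}"

text \<open>Koszul differential \<open>e_F \<mapsto> \<Sum>_{j\<in>F} (-1)^{|{l\<in>F. l<j}|} x_j e_{F-{j}}\<close>
  from degree \<open>i+1\<close> to degree \<open>i\<close> (terms landing in \<open>M\<close> vanish).\<close>
definition kdiff :: "nat \<Rightarrow> (nat \<Rightarrow> nat) set \<Rightarrow> nat \<Rightarrow> (nat \<Rightarrow> nat)
    \<Rightarrow> (nat set \<Rightarrow> 'k::field) \<Rightarrow> (nat set \<Rightarrow> 'k)" where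
  "kdiff n Mon i \<mu> c = (\<lambda>F'. if F' \<in> kbasis n Mon i \<mu> then
      (\<Sum>j\<in>{0..<n} - F'. (- 1) ^ card {l\<in>F'. l < j} * c (insert j F'))
     else 0)"

definition kscale :: "'k::field \<Rightarrow> (nat set \<Rightarrow> 'k) \<Rightarrow> (nat set \<Rightarrow> 'k)" where
  "kscale a c = (\<lambda>F. a * c F)"

definition kcycles :: "'k::field itself \<Rightarrow> nat \<Rightarrow> (nat \<Rightarrow> nat) set \<Rightarrow> nat \<Rightarrow> (nat \<Rightarrow> nat)
    \<Rightarrow> (nat set \<Rightarrow> 'k) set" where
  "kcycles K n Mon i \<mu> =
     (case i of 0 \<Rightarrow> kchains K n Mon 0 \<mu>
      | Suc i' \<Rightarrow> {c\<in>kchains K n Mon i \<mu>. kdiff n Mon i' \<mu> c = (\<lambda>_. 0)})"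

definition kboundaries :: "'k::field itself \<Rightarrow> nat \<Rightarrow> (nat \<Rightarrow> nat) set \<Rightarrow> nat \<Rightarrow> (nat \<Rightarrow> nat)
    \<Rightarrow> (nat set \<Rightarrow> 'k) set" where
  "kboundaries K n Mon i \<mu> = kdiff n Mon i \<mu> ` kchains K n Mon (Suc i) \<mu>"

definition betti_mdeg :: "'k::field itself \<Rightarrow> nat \<Rightarrow> (nat \<Rightarrow> nat) set \<Rightarrow> nat \<Rightarrow> (nat \<Rightarrow> nat) \<Rightarrow> nat" where
  "betti_mdeg K n Mon i \<mu> =
     (if \<mu> \<in> monoms n then
        vector_space.dim (kscale :: 'k \<Rightarrow> _) (kcycles K n Mon i \<mu>)
        - vector_space.dim (kscale :: 'k \<Rightarrow> _) (kboundaries K n Mon i \<mu>)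
      else 0)"

text \<open>Total Betti number \<open>\<beta>_i = \<Sum>_\<mu> \<beta>_{i,\<mu>}\<close> (only finitely many are nonzero).\<close>
definition betti :: "'k::field itself \<Rightarrow> nat \<Rightarrow> (nat \<Rightarrow> nat) set \<Rightarrow> nat \<Rightarrow> nat" where
  "betti K n Mon i = (\<Sum>\<mu>\<in>{\<mu>\<in>monoms n. betti_mdeg K n Mon i \<mu> \<noteq> 0}. betti_mdeg K n Mon i \<mu>)"

end

theory Submission
  imports Defs
begin


lemma vs_kscale: "vector_space (kscale :: 'k::field \<Rightarrow> (nat set \<Rightarrow> 'k) \<Rightarrow> _)"
  by unfold_locales (auto simp: kscale_def algebra_simps fun_eq_iff)

lemma finite_box: "finite {b \<in> monoms n. b \<le> (a::nat\<Rightarrow>nat)}"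
proof -
  have "{b \<in> monoms n. b \<le> a} \<subseteq> {f. \<forall>x. (x \<in> {0..<n} \<longrightarrow> f x \<in> {0..(\<Sum>j<n. a j)}) \<and> (x \<notin> {0..<n} \<longrightarrow> f x = 0)}"
  proof (clarsimp simp: monoms_def le_fun_def)
    fix b x assume "\<forall>j\<ge>n. b j = 0" "\<forall>x. b x \<le> a x" "x < n"
    then have "b x \<le> a x" by auto
    also have "a x \<le> (\<Sum>j<n. a j)" using \<open>x<n\<close> by (intro member_le_sum) auto
    finally show "b x \<le> (\<Sum>j<n. a j)" .
  qed
  then show ?thesis by (rule finite_subset) (intro finite_set_of_finite_funs; simp)
qed

lemma exists_min_gen:
  assumes "monomial_ideal n Mon" "a \<in> Mon"
  shows "\<exists>g\<in>min_gens Mon. g \<le> a"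
proof -
  let ?A = "{b \<in> Mon. b \<le> a}"
  have "?A \<subseteq> {b \<in> monoms n. b \<le> a}" using assms by (auto simp: monomial_ideal_def)
  then have fin: "finite ?A" using finite_box finite_subset by blast
  have "?A \<noteq> {}" using assms by auto
  from finite_has_minimal[OF fin this] obtain m where m: "m \<in> ?A" "\<forall>b\<in>?A. b \<le> m \<longrightarrow> m = b" by blast
  have "m \<in> min_gens Mon" unfolding min_gens_def
  proof (intro CollectI conjI ballI impI)
    show "m \<in> Mon" using m by simp
    fix h assume h: "h \<in> Mon" "h \<le> m"
    then have "h \<le> a" using m(1) by (auto intro: order_trans)
    then show "h = m" using m(2) h by auto
  qed
  then show ?thesis using m by auto
qed

lemma min_gens_sub: "min_gens Mon \<subseteq> Mon" by (auto simp: min_gens_def)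

lemma antichain_finite_aux:
  "finite J \<Longrightarrow> card J \<le> k \<Longrightarrow> (\<forall>a\<in>S. \<forall>b\<in>S. a \<le> b \<longrightarrow> a = b) \<Longrightarrow>
   (\<forall>a\<in>S. \<forall>b\<in>S. \<forall>j. j \<notin> J \<longrightarrow> a j = (b j::nat)) \<Longrightarrow> finite S"
proof (induction k arbitrary: J S)
  case 0
  then have J: "J = {}" by simp
  have eq: "a = b" if "a \<in> S" "b \<in> S" for a b
  proof
    fix x show "a x = b x" using 0(4) that J by blast
  qed
  show ?case
  proof (cases "S = {}")
    case False
    then obtain a where "a \<in> S" by blast
    then have "S \<subseteq> {a}" using eq by blast
    then show ?thesis using finite_subset by blast
  qed simp
next
  case (Suc k)
  show ?case
  proof (cases "S = {}")
    case True then show ?thesis by simp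
  next
    case False
    then obtain a0 where a0: "a0 \<in> S" by auto
    have sub: "S \<subseteq> insert a0 (\<Union>j\<in>J. \<Union>c\<in>{..<a0 j}. {g\<in>S. g j = c})"
    proof
      fix g assume g: "g \<in> S"
      show "g \<in> insert a0 (\<Union>j\<in>J. \<Union>c\<in>{..<a0 j}. {g\<in>S. g j = c})"
      proof (cases "g = a0")
        case False
        have "\<not> a0 \<le> g"
        proof
          assume "a0 \<le> g" then have "a0 = g" by (rule Suc.prems(3)[rule_format, OF a0 g])
          then show False using False by simp
        qed
        then obtain j where nj: "\<not> a0 j \<le> g j" by (meson le_funI)
        have "j \<in> J"
        proof (rule ccontr)
          assume "j \<notin> J"
          then have "a0 j = g j" using Suc.prems(4) a0 g by blast
          then show False using nj by simp
        qed
        have "g j \<in> {..<a0 j}" using nj by simp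
        moreover have "g \<in> {g'\<in>S. g' j = g j}" using g by simp
        ultimately have "g \<in> (\<Union>j\<in>J. \<Union>c\<in>{..<a0 j}. {g\<in>S. g j = c})"
          using \<open>j \<in> J\<close> by blast
        then show ?thesis by simp
      qed simp
    qed
    have "finite {g\<in>S. g j = c}" if "j \<in> J" for j c
    proof (rule Suc.IH[of "J - {j}"])
      show "finite (J - {j})" using Suc.prems(1) by simp
      show "card (J - {j}) \<le> k" using Suc.prems(1,2) that by simp
      show "\<forall>a\<in>{g \<in> S. g j = c}. \<forall>b\<in>{g \<in> S. g j = c}. a \<le> b \<longrightarrow> a = b"
        using Suc.prems(3) by blast
      show "\<forall>a\<in>{g \<in> S. g j = c}. \<forall>b\<in>{g \<in> S. g j = c}. \<forall>j'. j' \<notin> J - {j} \<longrightarrow> a j' = b j'"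
      proof (intro ballI allI impI)
        fix a b j' assume a: "a \<in> {g \<in> S. g j = c}" and b: "b \<in> {g \<in> S. g j = c}" and j': "j' \<notin> J - {j}"
        show "a j' = b j'"
        proof (cases "j' = j")
          case True then show ?thesis using a b by simp
        next
          case False then have "j' \<notin> J" using j' by simp
          then show ?thesis using Suc.prems(4) a b by blast
        qed
      qed
    qed
    then have "finite (insert a0 (\<Union>j\<in>J. \<Union>c\<in>{..<a0 j}. {g\<in>S. g j = c}))"
      using Suc.prems(1) by (intro finite.insertI finite_UN_I) auto
    then show ?thesis using sub by (rule finite_subset[rotated])
  qed
qed

lemma finite_min_gens:
  assumes "monomial_ideal n Mon" shows "finite (min_gens Mon)"
proof (rule antichain_finite_aux[of "{0..<n}" n])
  show "\<forall>a\<in>min_gens Mon. \<forall>b\<in>min_gens Mon. \<forall>j. j \<notin> {0..<n} \<longrightarrow> a j = b j"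
  proof (intro ballI allI impI)
    fix a b j assume a: "a \<in> min_gens Mon" and b: "b \<in> min_gens Mon" and j: "j \<notin> {0..<n}"
    have sub: "Mon \<subseteq> monoms n" using assms by (simp add: monomial_ideal_def)
    have "a \<in> monoms n" "b \<in> monoms n" using a b sub min_gens_sub by blast+
    then show "a j = b j" using j by (simp add: monoms_def)
  qed
  show "\<forall>a\<in>min_gens Mon. \<forall>b\<in>min_gens Mon. a \<le> b \<longrightarrow> a = b"
  proof (intro ballI impI)
    fix a b assume a: "a \<in> min_gens Mon" and b: "b \<in> min_gens Mon" and ab: "a \<le> b"
    have aM: "a \<in> Mon" using a by (simp add: min_gens_def)
    have "\<forall>h\<in>Mon. h \<le> b \<longrightarrow> h = b" using b by (simp add: min_gens_def)
    then show "a = b" using aM ab by simp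
  qed
qed simp_all

lemma finite_taylor: "finite G \<Longrightarrow> finite (taylor_mdegs G)"
proof -
  assume "finite G"
  have "taylor_mdegs G = lcm_mon ` Pow G" unfolding taylor_mdegs_def
    using \<open>finite G\<close> finite_subset by auto
  then show ?thesis using \<open>finite G\<close> by simp
qed



lemma ind_le_iff: "ind_set F \<le> \<mu> \<longleftrightarrow> (\<forall>j\<in>F. 0 < \<mu> j)"
  by (auto simp: ind_set_def le_fun_def)

lemma kbasis_twin:
  assumes MI: "monomial_ideal n Mon" and mu: "\<mu> \<in> monoms n"
  shows "kbasis n Mon i \<mu> = kbasis n (twin_ideal n Mon \<mu>) i (y_mon n \<mu>)"
proof -
  have key: "\<mu> - ind_set F \<in> Mon \<longleftrightarrow> y_mon n \<mu> - ind_set F \<in> twin_ideal n Mon \<mu>"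
    if F: "F \<subseteq> {0..<n}" "\<forall>j\<in>F. 0 < \<mu> j" for F
  proof
    assume "\<mu> - ind_set F \<in> Mon"
    then obtain g where g: "g \<in> min_gens Mon" "g \<le> \<mu> - ind_set F" using exists_min_gen[OF MI] by blast
    have "g \<le> \<mu>" using g(2) by (auto simp: le_fun_def) (metis diff_le_self le_trans)
    moreover have "twin_gen n \<mu> g \<le> y_mon n \<mu> - ind_set F"
      unfolding le_fun_def
    proof
      fix j
      show "twin_gen n \<mu> g j \<le> (y_mon n \<mu> - ind_set F) j"
      proof (cases "j < n \<and> 0 < \<mu> j \<and> g j = \<mu> j")
        case True
        have "j \<notin> F" using g(2) True by (auto simp: le_fun_def ind_set_def) (metis True diff_less less_numeral_extra(1) linorder_not_le)
        then show ?thesis using True by (simp add: twin_gen_def y_mon_def ind_set_def)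
      next
        case False then show ?thesis by (auto simp: twin_gen_def)
      qed
    qed
    moreover have "y_mon n \<mu> - ind_set F \<in> monoms n" by (auto simp: monoms_def y_mon_def)
    ultimately show "y_mon n \<mu> - ind_set F \<in> twin_ideal n Mon \<mu>" using g(1) by (auto simp: twin_ideal_def)
  next
    assume "y_mon n \<mu> - ind_set F \<in> twin_ideal n Mon \<mu>"
    then obtain g where g: "g \<in> min_gens Mon" "g \<le> \<mu>" "twin_gen n \<mu> g \<le> y_mon n \<mu> - ind_set F"
      by (auto simp: twin_ideal_def)
    have "g \<le> \<mu> - ind_set F"
      unfolding le_fun_def
    proof
      fix j
      show "g j \<le> (\<mu> - ind_set F) j"
      proof (cases "j \<in> F")
        case True
        then have "j < n" "0 < \<mu> j" using F by auto
        have "twin_gen n \<mu> g j \<le> 0" using g(3) True \<open>j<n\<close> \<open>0<\<mu> j\<close>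
          by (auto simp: le_fun_def y_mon_def ind_set_def elim!: allE[of _ j])
        then have "g j \<noteq> \<mu> j" using \<open>j<n\<close> \<open>0<\<mu> j\<close> by (auto simp: twin_gen_def split: if_splits)
        moreover have "g j \<le> \<mu> j" using g(2) by (auto simp: le_fun_def)
        ultimately show ?thesis using True by (simp add: ind_set_def)
      next
        case False
        then show ?thesis using g(2) by (simp add: ind_set_def le_fun_def)
      qed
    qed
    moreover have "\<mu> - ind_set F \<in> monoms n" using mu by (auto simp: monoms_def)
    moreover have "g \<in> Mon" using g(1) min_gens_sub by blast
    ultimately show "\<mu> - ind_set F \<in> Mon" using MI by (auto simp: monomial_ideal_def)
  qed
  have ind: "ind_set F \<le> \<mu> \<longleftrightarrow> ind_set F \<le> y_mon n \<mu>" if "F \<subseteq> {0..<n}" for F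
    using that by (auto simp: ind_le_iff y_mon_def)
  show ?thesis unfolding kbasis_def
    using ind key by (auto simp: ind_le_iff)
qed

lemma betti_twin:
  assumes MI: "monomial_ideal n Mon" and mu: "\<mu> \<in> monoms n"
  shows "betti_mdeg K n Mon i \<mu> = betti_mdeg K n (twin_ideal n Mon \<mu>) i (y_mon n \<mu>)"
proof -
  have ym: "y_mon n \<mu> \<in> monoms n" by (auto simp: monoms_def y_mon_def)
  have kb: "\<And>i. kbasis n Mon i \<mu> = kbasis n (twin_ideal n Mon \<mu>) i (y_mon n \<mu>)"
    using kbasis_twin[OF MI mu] .
  have kd: "\<And>i. kdiff n Mon i \<mu> = kdiff n (twin_ideal n Mon \<mu>) i (y_mon n \<mu>)"
    unfolding kdiff_def kb ..
  have kc: "\<And>i. kchains K n Mon i \<mu> = kchains K n (twin_ideal n Mon \<mu>) i (y_mon n \<mu>)"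
    unfolding kchains_def kb ..
  show ?thesis
    unfolding betti_mdeg_def kcycles_def kboundaries_def kd kc using mu ym by simp
qed



interpretation kv: vector_space "kscale :: 'k::field \<Rightarrow> (nat set \<Rightarrow> 'k) \<Rightarrow> _"
  by (rule vs_kscale)

lemma sum_fun_apply: "(\<Sum>x\<in>A. f x) y = (\<Sum>x\<in>A. f x y)"
  by (induction A rule: infinite_finite_induct) auto

definition eps :: "nat \<Rightarrow> nat set \<Rightarrow> 'k::field" where
  "eps k F = (-1) ^ card {l\<in>F. l < k}"

lemma eps_sq: "eps k F * eps k F = (1::'k::field)"
  by (simp add: eps_def power_mult_distrib[symmetric])

lemma card_ins_less: "finite F \<Longrightarrow> j \<notin> F \<Longrightarrow>
   card {l\<in>insert j F. l < k} = card {l\<in>F. l < k} + (if j < k then 1 else 0)"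
proof -
  assume "finite F" "j \<notin> F"
  have "{l\<in>insert j F. l < k} = (if j < k then insert j {l\<in>F. l < k} else {l\<in>F. l < k})" by auto
  then show ?thesis using \<open>finite F\<close> \<open>j \<notin> F\<close> by auto
qed

lemma eps_swap:
  assumes "finite F" "k \<noteq> j" "k \<notin> F" "j \<notin> F"
  shows "eps k (insert j F) * eps j (insert k F) = - (eps k F * (eps j F :: 'k::field))"
proof -
  have c1: "card {l\<in>insert j F. l < k} = card {l\<in>F. l < k} + (if j < k then 1 else 0)"
    using assms by (intro card_ins_less) auto
  have c2: "card {l\<in>insert k F. l < j} = card {l\<in>F. l < j} + (if k < j then 1 else 0)"
    using assms by (intro card_ins_less) auto
  have "j < k \<or> k < j" using assms by auto
  then show ?thesis unfolding eps_def c1 c2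
    by (auto simp: power_add)
qed

locale cone =
  fixes n Mon \<mu> j
  assumes MI: "monomial_ideal n Mon" and mu: "\<mu> \<in> monoms n" and jn: "j < n" and mj: "0 < \<mu> j"
    and inv: "\<And>F. j \<notin> F \<Longrightarrow> (\<mu> - ind_set F \<in> Mon \<longleftrightarrow> \<mu> - ind_set (insert j F) \<in> Mon)"
begin

lemma kb_inv: "j \<notin> F \<Longrightarrow> F \<in> kbasis n Mon i \<mu> \<longleftrightarrow> insert j F \<in> kbasis n Mon (Suc i) \<mu>"
  using inv[of F] jn mj
  by (auto simp: kbasis_def ind_le_iff card_insert_if finite_subset)

definition hc :: "(nat set \<Rightarrow> 'k::field) \<Rightarrow> nat set \<Rightarrow> 'k" where
  "hc c = (\<lambda>F. if j \<in> F then eps j (F - {j}) * c (F - {j}) else 0)"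

lemma hc_chain:
  assumes "c \<in> kchains K n Mon i \<mu>"
  shows "hc c \<in> kchains K n Mon (Suc i) \<mu>"
  unfolding kchains_def mem_Collect_eq
proof (intro allI impI)
  fix F assume F: "F \<notin> kbasis n Mon (Suc i) \<mu>"
  show "hc c F = 0"
  proof (cases "j \<in> F")
    case True
    then have "F - {j} \<notin> kbasis n Mon i \<mu>" using kb_inv[of "F - {j}" i] F by (simp add: insert_absorb)
    then show ?thesis using assms by (simp add: kchains_def hc_def)
  qed (simp add: hc_def)
qed

lemma hc_diff:
  fixes c :: "nat set \<Rightarrow> 'k::field"
  assumes c: "c \<in> kchains K n Mon i \<mu>"
    and cyc: "\<And>i'. i = Suc i' \<Longrightarrow> kdiff n Mon i' \<mu> c = (\<lambda>_. 0)"
  shows "kdiff n Mon i \<mu> (hc c) = c"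
proof
  fix F'
  show "kdiff n Mon i \<mu> (hc c) F' = c F'"
  proof (cases "F' \<in> kbasis n Mon i \<mu>")
    case False
    then show ?thesis using c by (simp add: kdiff_def kchains_def)
  next
    case Fb: True
    then have F'sub: "F' \<subseteq> {0..<n}" and cardF': "card F' = i" by (auto simp: kbasis_def)
    have finF': "finite F'" using F'sub finite_subset by blast
    show ?thesis
    proof (cases "j \<in> F'")
      case False
      have jin: "j \<in> {0..<n} - F'" using False jn by auto
      have "kdiff n Mon i \<mu> (hc c) F' = (\<Sum>k\<in>{0..<n} - F'. eps k F' * hc c (insert k F'))"
        using Fb by (simp add: kdiff_def eps_def)
      also have "\<dots> = eps j F' * hc c (insert j F') + (\<Sum>k\<in>({0..<n} - F') - {j}. eps k F' * hc c (insert k F'))"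
        using jin by (simp add: sum.remove)
      also have "(\<Sum>k\<in>({0..<n} - F') - {j}. eps k F' * hc c (insert k F')) = 0"
        using False by (intro sum.neutral) (auto simp: hc_def)
      also have "hc c (insert j F') = eps j F' * c F'"
        using False by (simp add: hc_def)
      finally show ?thesis by (simp add: mult.assoc[symmetric] eps_sq)
    next
      case True
      define F'' where "F'' = F' - {j}"
      have F'eq: "F' = insert j F''" using True by (auto simp: F''_def)
      have jF'': "j \<notin> F''" by (simp add: F''_def)
      have finF'': "finite F''" using finF' by (simp add: F''_def)
      obtain i' where i': "i = Suc i'" using cardF' True finF' by (cases i) auto
      have F''b: "F'' \<in> kbasis n Mon i' \<mu>" using kb_inv[OF jF'', of i'] Fb F'eq i' by simp
      define S where "S = (\<Sum>k\<in>{0..<n} - F'. eps k F'' * c (insert k F''))"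
      have set_eq: "{0..<n} - F'' = insert j ({0..<n} - F')" using jn F'eq jF'' by auto
      have "0 = kdiff n Mon i' \<mu> c F''" using cyc[OF i'] by simp
      also have "\<dots> = (\<Sum>k\<in>{0..<n} - F''. eps k F'' * c (insert k F''))"
        using F''b by (simp add: kdiff_def eps_def)
      also have "\<dots> = eps j F'' * c F' + S"
        unfolding set_eq S_def by (subst sum.insert) (auto simp: F'eq)
      finally have S: "S = - (eps j F'' * c F')" by (simp add: eq_neg_iff_add_eq_0 add.commute)
      have "kdiff n Mon i \<mu> (hc c) F' = (\<Sum>k\<in>{0..<n} - F'. eps k F' * hc c (insert k F'))"
        using Fb by (simp add: kdiff_def eps_def)
      also have "\<dots> = (\<Sum>k\<in>{0..<n} - F'. - (eps j F'' * (eps k F'' * c (insert k F''))))"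
      proof (rule sum.cong[OF refl])
        fix k assume k: "k \<in> {0..<n} - F'"
        then have kj: "k \<noteq> j" "k \<notin> F''" using F'eq by auto
        have "insert k F' - {j} = insert k F''" using kj jF'' F'eq by auto
        then have hk: "hc c (insert k F') = eps j (insert k F'') * c (insert k F'')"
          by (simp add: hc_def F'eq)
        have "eps k F' * hc c (insert k F') = (eps k (insert j F'') * eps j (insert k F'')) * c (insert k F'')"
          using hk F'eq by (simp add: mult.assoc)
        also have "\<dots> = - (eps k F'' * eps j F'') * c (insert k F'')"
          unfolding eps_swap[OF finF'' kj(1) kj(2) jF''] ..
        also have "\<dots> = - (eps j F'' * (eps k F'' * c (insert k F'')))" by (simp add: algebra_simps)
        finally show "eps k F' * hc c (insert k F') = - (eps j F'' * (eps k F'' * c (insert k F'')))" .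
      qed
      also have "\<dots> = - (eps j F'' * S)"
        by (simp add: S_def sum_distrib_left sum_negf)
      also have "\<dots> = c F'" using S by (simp add: mult.assoc[symmetric] eps_sq)
      finally show ?thesis .
    qed
  qed
qed

lemma cycles_sub:
  fixes K :: "'k::field itself"
  shows "kcycles K n Mon i \<mu> \<subseteq> kboundaries K n Mon i \<mu>"
proof
  fix c :: "nat set \<Rightarrow> 'k" assume c: "c \<in> kcycles K n Mon i \<mu>"
  then have c1: "c \<in> kchains K n Mon i \<mu>" by (auto simp: kcycles_def split: nat.splits)
  have c2: "kdiff n Mon i' \<mu> c = (\<lambda>_. 0)" if "i = Suc i'" for i'
    using c that by (auto simp: kcycles_def)
  have "c = kdiff n Mon i \<mu> (hc c)" using hc_diff[OF c1 c2] by simp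
  then show "c \<in> kboundaries K n Mon i \<mu>"
    unfolding kboundaries_def using hc_chain[OF c1] by blast
qed

end

definition delta :: "nat set \<Rightarrow> nat set \<Rightarrow> 'k::field" where
  "delta F = (\<lambda>G. if G = F then 1 else 0)"

lemma finite_kbasis: "finite (kbasis n Mon i \<mu>)"
  by (rule finite_subset[of _ "Pow {0..<n}"]) (auto simp: kbasis_def)

lemma chains_span:
  "kchains (K::'k::field itself) n Mon i \<mu> \<subseteq> kv.span (delta ` kbasis n Mon i \<mu> :: (nat set \<Rightarrow> 'k) set)"
proof
  fix c :: "nat set \<Rightarrow> 'k" assume c: "c \<in> kchains K n Mon i \<mu>"
  have "c = (\<Sum>F\<in>kbasis n Mon i \<mu>. kscale (c F) (delta F))"
  proof
    fix G
    show "c G = (\<Sum>F\<in>kbasis n Mon i \<mu>. kscale (c F) (delta F)) G"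
    proof -
      have e: "\<And>x. kscale (c x) (delta x) G = (if G = x then c G else 0)"
        by (simp add: kscale_def delta_def)
      show ?thesis unfolding sum_fun_apply e sum.delta'[OF finite_kbasis]
        using c by (auto simp: kchains_def)
    qed
  qed
  also have "\<dots> \<in> kv.span (delta ` kbasis n Mon i \<mu>)"
    by (intro kv.span_sum kv.span_scale kv.span_base) auto
  finally show "c \<in> kv.span (delta ` kbasis n Mon i \<mu>)" .
qed

lemma betti_zero_if_sub:
  assumes "kcycles (K::'k::field itself) n Mon i \<mu> \<subseteq> kboundaries K n Mon i \<mu>"
  shows "betti_mdeg K n Mon i \<mu> = 0"
proof -
  let ?B = "kboundaries K n Mon i \<mu>"
  let ?W = "delta ` kbasis n Mon i \<mu> :: (nat set \<Rightarrow> 'k) set"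
  have Bsub: "?B \<subseteq> kv.span ?W"
  proof
    fix b assume "b \<in> ?B"
    then obtain c where c: "c \<in> kchains K n Mon (Suc i) \<mu>" "b = kdiff n Mon i \<mu> c"
      by (auto simp: kboundaries_def)
    have "b \<in> kchains K n Mon i \<mu>" using c(2) by (auto simp: kchains_def kdiff_def)
    then show "b \<in> kv.span ?W" using chains_span by blast
  qed
  obtain A where A: "A \<subseteq> ?B" "kv.independent A" "?B \<subseteq> kv.span A" "card A = kv.dim ?B"
    by (rule kv.basis_exists)
  have AW: "A \<subseteq> kv.span ?W" using A(1) Bsub by (rule order_trans)
  have finA: "finite A" using kv.independent_span_bound[OF finite_imageI[OF finite_kbasis] A(2) AW] by (rule conjunct1)
  have "kv.dim (kcycles K n Mon i \<mu>) \<le> card A"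
    by (rule kv.dim_le_card[OF order_trans[OF assms A(3)] finA])
  then show ?thesis unfolding betti_mdeg_def using A(4) by simp
qed



lemma lcm_le:
  assumes "finite D" "\<And>g. g \<in> D \<Longrightarrow> g \<le> \<mu>"
  shows "lcm_mon D \<le> (\<mu>::nat\<Rightarrow>nat)"
proof (rule le_funI)
  fix j
  have "\<forall>x\<in>insert 0 ((\<lambda>g. g j) ` D). x \<le> \<mu> j"
    using assms(2) by (auto simp: le_fun_def)
  then show "lcm_mon D j \<le> \<mu> j" unfolding lcm_mon_def using assms(1)
    by (subst Max_le_iff) auto
qed

lemma le_lcm:
  assumes "finite D" "g \<in> D"
  shows "g j \<le> lcm_mon D j"
  unfolding lcm_mon_def using assms by (intro Max_ge) auto

lemma support:
  fixes K :: "'k::field itself"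
  assumes MI: "monomial_ideal n Mon" and mu: "\<mu> \<in> monoms n"
    and nt: "\<mu> \<notin> taylor_mdegs (min_gens Mon)"
  shows "betti_mdeg K n Mon i \<mu> = 0"
proof -
  define G' where "G' = {g\<in>min_gens Mon. g \<le> \<mu>}"
  have "G' \<subseteq> {b \<in> monoms n. b \<le> \<mu>}"
  proof
    fix g assume "g \<in> G'"
    then have "g \<in> min_gens Mon" "g \<le> \<mu>" by (auto simp: G'_def)
    moreover have "Mon \<subseteq> monoms n" using MI by (simp add: monomial_ideal_def)
    ultimately show "g \<in> {b \<in> monoms n. b \<le> \<mu>}" using min_gens_sub by blast
  qed
  then have finG': "finite G'" using finite_box finite_subset by blast
  have "lcm_mon G' \<in> taylor_mdegs (min_gens Mon)"
    unfolding taylor_mdegs_def using finG' by (auto simp: G'_def)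
  then have ne: "lcm_mon G' \<noteq> \<mu>" using nt by auto
  have le: "lcm_mon G' \<le> \<mu>" by (rule lcm_le[OF finG']) (simp add: G'_def)
  obtain j where j: "lcm_mon G' j < \<mu> j"
  proof -
    have "\<exists>j. lcm_mon G' j \<noteq> \<mu> j" using ne by (simp add: fun_eq_iff)
    then obtain j where "lcm_mon G' j \<noteq> \<mu> j" by blast
    moreover have "lcm_mon G' j \<le> \<mu> j" using le by (simp add: le_fun_def)
    ultimately have "lcm_mon G' j < \<mu> j" by simp
    then show ?thesis by (rule that)
  qed
  have mj: "0 < \<mu> j" using j by simp
  have jn: "j < n"
  proof (rule ccontr)
    assume "\<not> j < n" then have "\<mu> j = 0" using mu by (simp add: monoms_def)
    then show False using mj by simp
  qed
  have inv: "\<mu> - ind_set F \<in> Mon \<longleftrightarrow> \<mu> - ind_set (insert j F) \<in> Mon" if jF: "j \<notin> F" for F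
  proof
    assume "\<mu> - ind_set F \<in> Mon"
    then obtain g where g: "g \<in> min_gens Mon" "g \<le> \<mu> - ind_set F" using exists_min_gen[OF MI] by blast
    have gmu: "g \<le> \<mu>" using g(2) by (auto simp: le_fun_def) (metis diff_le_self le_trans)
    then have "g \<in> G'" using g(1) by (simp add: G'_def)
    then have gj: "g j < \<mu> j" using le_lcm[OF finG', of g j] j by simp
    have "g \<le> \<mu> - ind_set (insert j F)"
    proof (rule le_funI)
      fix l
      show "g l \<le> (\<mu> - ind_set (insert j F)) l"
      proof (cases "l = j")
        case True then show ?thesis using gj by (simp add: ind_set_def)
      next
        case False
        then have "ind_set (insert j F) l = ind_set F l" by (simp add: ind_set_def)
        then show ?thesis using g(2) by (simp add: le_fun_def)
      qed
    qed
    moreover have "\<mu> - ind_set (insert j F) \<in> monoms n" using mu by (simp add: monoms_def)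
    moreover have "g \<in> Mon" using g(1) min_gens_sub by blast
    ultimately show "\<mu> - ind_set (insert j F) \<in> Mon" using MI by (simp add: monomial_ideal_def)
  next
    assume a: "\<mu> - ind_set (insert j F) \<in> Mon"
    have "\<mu> - ind_set (insert j F) \<le> \<mu> - ind_set F"
      by (rule le_funI) (simp add: ind_set_def)
    moreover have "\<mu> - ind_set F \<in> monoms n" using mu by (simp add: monoms_def)
    ultimately show "\<mu> - ind_set F \<in> Mon" using MI a by (simp add: monomial_ideal_def)
  qed
  interpret cone n Mon \<mu> j
    by (rule cone.intro[OF MI mu jn mj inv])
  show ?thesis by (rule betti_zero_if_sub[OF cycles_sub])
qed

lemma taylor_monoms:
  assumes MI: "monomial_ideal n Mon"
  shows "taylor_mdegs (min_gens Mon) \<subseteq> monoms n"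
proof
  fix m assume "m \<in> taylor_mdegs (min_gens Mon)"
  then obtain D where D: "m = lcm_mon D" "D \<subseteq> min_gens Mon" "finite D" by (auto simp: taylor_mdegs_def)
  have sub: "D \<subseteq> monoms n" using D(2) min_gens_sub MI by (auto simp: monomial_ideal_def)
  show "m \<in> monoms n" unfolding monoms_def
  proof (intro CollectI allI impI)
    fix j assume "n \<le> j"
    then have "\<forall>g\<in>D. g j = 0" using sub by (auto simp: monoms_def)
    then have "insert 0 ((\<lambda>g. g j) ` D) = {0}" by auto
    then show "m j = 0" unfolding D(1) lcm_mon_def by (metis Max_singleton)
  qed
qed

theorem corollary9:
  fixes Mon :: "(nat \<Rightarrow> nat) set" and i :: nat
  assumes "monomial_ideal 4 Mon"
  shows "betti TYPE('k::field) 4 Mon i =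
    (\<Sum>m\<in>taylor_mdegs (min_gens Mon). betti_mdeg TYPE('k) 4 (twin_ideal 4 Mon m) i (y_mon 4 m))"
proof -
  let ?b = "betti_mdeg TYPE('k) 4 Mon i"
  let ?T = "taylor_mdegs (min_gens Mon)"
  have finT: "finite ?T" using finite_taylor[OF finite_min_gens[OF assms]] .
  have Tm: "?T \<subseteq> monoms 4" by (rule taylor_monoms[OF assms])
  have AT: "{\<mu>\<in>monoms 4. ?b \<mu> \<noteq> 0} \<subseteq> ?T"
  proof
    fix \<mu> assume "\<mu> \<in> {\<mu>\<in>monoms 4. ?b \<mu> \<noteq> 0}"
    then have mu: "\<mu> \<in> monoms 4" and nz: "?b \<mu> \<noteq> 0" by auto
    show "\<mu> \<in> ?T"
    proof (rule ccontr)
      assume "\<mu> \<notin> ?T"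
      then have "?b \<mu> = 0" by (rule support[OF assms mu])
      then show False using nz by simp
    qed
  qed
  have "betti TYPE('k) 4 Mon i = (\<Sum>\<mu>\<in>?T. ?b \<mu>)"
    unfolding betti_def
    by (rule sum.mono_neutral_left[OF finT AT]) (use Tm in auto)
  also have "\<dots> = (\<Sum>m\<in>?T. betti_mdeg TYPE('k) 4 (twin_ideal 4 Mon m) i (y_mon 4 m))"
  proof (rule sum.cong[OF refl])
    fix m assume "m \<in> ?T"
    then have "m \<in> monoms 4" using Tm by blast
    then show "?b m = betti_mdeg TYPE('k) 4 (twin_ideal 4 Mon m) i (y_mon 4 m)"
      by (rule betti_twin[OF assms])
  qed
  finally show ?thesis .
qed


end
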